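(* Let $(X,\Sigma)$ be a measurable space, $(\mathcal{E}_t)_{t\ge0}$ a process of pavings, $\boldsymbol{\mu}=(\mu_t)_{t\ge0}$ a family of monotone measures on $\Sigma$, and $\mathscr{A}=\{\mathsf{A}_t(\cdot|E)\colon E\in\mathcal{E}_t,\,t\ge0\}$ an idempotent parametric family of conditional aggregation operators. Then for every $\lambda>0$ and every $t\ge0$, $$\boldsymbol{\mu}_{\mathscr{A}}(\lambda\mathbf{1}_X,t)=\sup\{\mu_t(E)\colon E\in\mathcal{E}_t\}\cdot\mathbf{1}_{[0,\lambda]}(t).$$ In particular, $\boldsymbol{\mu}_{\mathscr{A}}(\lambda\mathbf{1}_X,t)=\mu_t(X)\mathbf{1}_{[0,\lambda]}(t)$ if $X\in\mathcal{E}_t$.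
   Context: Convention: $\infty\cdot 0=0$. $\Sigma^0=\Sigma\setminus\{\emptyset\}$. $\mathbf{F}$ denotes the set of all $\Sigma$-measurable, nonnegative, bounded functions $f\colon X\to[0,\infty)$. A monotone measure is a map $\mu\colon\Sigma\to[0,\infty]$ with $\mu(B)\le\mu(C)$ whenever $B\subseteq C$, $\mu(\emptyset)=0$ and $\mu(X)>0$. For $E\in\Sigma^0$, a conditional aggregation operator (CAO) w.r.t. $E$ is a map $\mathsf{A}(\cdot|E)\colon\mathbf{F}\to[0,\infty]$ such that (C1) $\mathsf{A}(f|E)\le\mathsf{A}(g|E)$ whenever $f(x)\le g(x)$ for all $x\in E$, and (C2) $\mathsf{A}(\mathbf{1}_{X\setminus E}|E)=0$. A process of pavings is a family $(\mathcal{E}_t)_{t\ge0}$ with $\emptyset\in\mathcal{E}_t\subseteq\Sigma$ for all $t$; $\mathcal{E}_t^0=\mathcal{E}_t\setminus\{\emptyset\}$. A parametric family of CAOs (pFCA) $\{\mathsf{A}_t(\cdot|E)\colon E\in\mathcal{E}_t,\,t\ge0\}$ consists of CAOs $\mathsf{A}_t(\cdot|E)$ w.r.t. $E$ for each $t$ and $E\in\mathcal{E}_t^0$, with the convention $\mathsf{A}_t(\cdot|\emptyset)=\infty$. The pFCA is idempotent if $\mathsf{A}_t(b\mathbf{1}_X|E)=b$ for all $b\in(0,\infty)$, all $t\ge0$ and all $E\in\mathcal{E}_t^0$. The generalized level measure is $\boldsymbol{\mu}_{\mathscr{A}}(f,t)=\sup\{\mu_t(E)\colon \mathsf{A}_t(f|E)\ge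 t,\ E\in\mathcal{E}_t\}$ for $t\ge0$. *)

theory Defs
  imports "HOL-Analysis.Analysis"
begin

text \<open>The measurable space (X, Sigma) is a measure M with X = space M, Sigma = sets M.
  Functions are real-valued on the whole type; only their values on X matter.\<close>

definition bnd_nonneg_meas :: "'a measure \<Rightarrow> ('a \<Rightarrow> real) set" where
  "bnd_nonneg_meas M = {f. f \<in> borel_measurable M \<and> (\<forall>x\<in>space M. 0 \<le> f x)
      \<and> (\<exists>c. \<forall>x\<in>space M. f x \<le> c)}"

definition monotone_measure :: "'a measure \<Rightarrow> ('a set \<Rightarrow> ennreal) \<Rightarrow> bool" where
  "monotone_measure M \<mu> \<longleftrightarrow>
     (\<forall>B\<in>sets M. \<forall>C\<in>sets M. B \<subseteq> C \<longrightarrow> \<mu> B \<le> \<mu> C) \<and> \<mu> {} = 0 \<and> \<mu> (space M) > 0"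

definition CAO :: "'a measure \<Rightarrow> 'a set \<Rightarrow> (('a \<Rightarrow> real) \<Rightarrow> ennreal) \<Rightarrow> bool" where
  "CAO M E A \<longleftrightarrow>
     (\<forall>f\<in>bnd_nonneg_meas M. \<forall>g\<in>bnd_nonneg_meas M.
        (\<forall>x\<in>E. f x \<le> g x) \<longrightarrow> A f \<le> A g) \<and>
     A (indicator (space M - E)) = 0"

definition paving_process :: "'a measure \<Rightarrow> (real \<Rightarrow> 'a set set) \<Rightarrow> bool" where
  "paving_process M \<E> \<longleftrightarrow> (\<forall>t\<ge>0. {} \<in> \<E> t \<and> \<E> t \<subseteq> sets M)"

definition pFCA :: "'a measure \<Rightarrow> (real \<Rightarrow> 'a set set)
      \<Rightarrow> (real \<Rightarrow> 'a set \<Rightarrow> ('a \<Rightarrow> real) \<Rightarrow> ennreal) \<Rightarrow> bool" where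
  "pFCA M \<E> A \<longleftrightarrow>
     (\<forall>t\<ge>0. \<forall>E\<in>\<E> t. E \<noteq> {} \<longrightarrow> CAO M E (A t E)) \<and>
     (\<forall>t\<ge>0. \<forall>f. A t {} f = \<infinity>)"

definition idempotent_pFCA :: "(real \<Rightarrow> 'a set set)
      \<Rightarrow> (real \<Rightarrow> 'a set \<Rightarrow> ('a \<Rightarrow> real) \<Rightarrow> ennreal) \<Rightarrow> bool" where
  "idempotent_pFCA \<E> A \<longleftrightarrow>
     (\<forall>b>0. \<forall>t\<ge>0. \<forall>E\<in>\<E> t. E \<noteq> {} \<longrightarrow> A t E (\<lambda>x. b) = ennreal b)"

definition gen_level_measure ::
  "(real \<Rightarrow> 'a set set) \<Rightarrow> (real \<Rightarrow> 'a set \<Rightarrow> ennreal)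
     \<Rightarrow> (real \<Rightarrow> 'a set \<Rightarrow> ('a \<Rightarrow> real) \<Rightarrow> ennreal) \<Rightarrow> ('a \<Rightarrow> real) \<Rightarrow> real \<Rightarrow> ennreal" where
  "gen_level_measure \<E> \<mu> A f t = Sup {\<mu> t E | E. E \<in> \<E> t \<and> A t E f \<ge> ennreal t}"

end

theory Submission
  imports Defs
begin

theorem proposition3p8:
  fixes M :: "'a measure" and \<E> :: "real \<Rightarrow> 'a set set"
    and \<mu> :: "real \<Rightarrow> 'a set \<Rightarrow> ennreal"
    and A :: "real \<Rightarrow> 'a set \<Rightarrow> ('a \<Rightarrow> real) \<Rightarrow> ennreal"
    and lam t :: real
  assumes "paving_process M \<E>"
    and "\<forall>s\<ge>0. monotone_measure M (\<mu> s)"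
    and "pFCA M \<E> A"
    and "idempotent_pFCA \<E> A"
    and "lam > 0" and "t \<ge> 0"
  shows "gen_level_measure \<E> \<mu> A (\<lambda>x. lam) t
           = (SUP E\<in>\<E> t. \<mu> t E) * indicator {0..lam} t
     \<and> (space M \<in> \<E> t \<longrightarrow>
           gen_level_measure \<E> \<mu> A (\<lambda>x. lam) t = \<mu> t (space M) * indicator {0..lam} t)"
proof -
  have emp: "{} \<in> \<E> t" and sub: "\<E> t \<subseteq> sets M"
    using assms(1,6) unfolding paving_process_def by auto
  have mm: "monotone_measure M (\<mu> t)" using assms(2,6) by auto
  have mu0: "\<mu> t {} = 0" using mm unfolding monotone_measure_def by auto
  have Aemp: "A t {} (\<lambda>x. lam) = \<infinity>" using assms(3,6) unfolding pFCA_def by auto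
  have Ane: "A t E (\<lambda>x. lam) = ennreal lam" if "E \<in> \<E> t" "E \<noteq> {}" for E
    using assms(4,5,6) that unfolding idempotent_pFCA_def by auto
  have main: "gen_level_measure \<E> \<mu> A (\<lambda>x. lam) t = (SUP E\<in>\<E> t. \<mu> t E) * indicator {0..lam} t"
  proof (cases "t \<le> lam")
    case True
    have "{\<mu> t E | E. E \<in> \<E> t \<and> A t E (\<lambda>x. lam) \<ge> ennreal t} = \<mu> t ` \<E> t"
    proof -
      have "E \<in> \<E> t \<Longrightarrow> A t E (\<lambda>x. lam) \<ge> ennreal t" for E
        using Aemp Ane True by (cases "E = {}") (auto simp: ennreal_leI)
      then show ?thesis by auto
    qed
    then show ?thesis unfolding gen_level_measure_def using True assms(6)
      by (simp add: indicator_def)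
  next
    case False
    have "{\<mu> t E | E. E \<in> \<E> t \<and> A t E (\<lambda>x. lam) \<ge> ennreal t} = {0}"
    proof -
      have "E \<in> \<E> t \<Longrightarrow> A t E (\<lambda>x. lam) \<ge> ennreal t \<Longrightarrow> E = {}" for E
        using Ane False assms(5) by (cases "E = {}") (auto simp: ennreal_le_iff)
      then show ?thesis using emp mu0 Aemp by auto
    qed
    then show ?thesis unfolding gen_level_measure_def using False
      by (simp add: indicator_def)
  qed
  moreover have "(SUP E\<in>\<E> t. \<mu> t E) = \<mu> t (space M)" if "space M \<in> \<E> t"
  proof (rule antisym)
    show "(SUP E\<in>\<E> t. \<mu> t E) \<le> \<mu> t (space M)"
    proof (rule SUP_least)
      fix E assume "E \<in> \<E> t"
      then have "E \<in> sets M" using sub by auto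
      then show "\<mu> t E \<le> \<mu> t (space M)"
        using mm sets.sets_into_space[OF `E \<in> sets M`] sets.top unfolding monotone_measure_def by blast
    qed
    show "\<mu> t (space M) \<le> (SUP E\<in>\<E> t. \<mu> t E)" using that by (rule SUP_upper)
  qed
  ultimately show ?thesis by auto
qed

end
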